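(* Let $k\in\mathbb{N}$ and let $A$ be a Borel subset of $\mathbb{R}^k$. Then \[\gamma_k(A-A)\ge\gamma_k(A)^4,\] where $A-A=\{a-a':a,a'\in A\}$.
   Context: $\gamma_k$ denotes the Gaussian measure on $\mathbb{R}^k$ with $\gamma_k(S)=\mathbb{P}(g\in S)$, $g\sim\mathcal{N}(0,(2\pi)^{-1}I_k)$. *)

theory Defs
  imports "HOL-Analysis.Analysis"
begin

text \<open>We use the
  completed Lebesgue measure so that the difference set A - A of a Borel set
  (an analytic, hence Lebesgue measurable, set) is measurable.\<close>
definition gaussian_measure :: "'a::euclidean_space measure" where
  "gaussian_measure = density lebesgue (\<lambda>x. ennreal (exp (- pi * norm x ^ 2)))"

end

theory Submission
  imports Defs "HOL-Probability.Probability"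
begin


definition phi :: "'a::euclidean_space \<Rightarrow> ennreal" where
  "phi x = ennreal (exp (- pi * norm x ^ 2))"

lemma phi_measurable[measurable]: "phi \<in> borel_measurable borel"
  unfolding phi_def by measurable

lemma phi_neg: "phi (- x) = phi x"
  unfolding phi_def by simp

lemma nn_integral_affine_eucl:
  fixes f :: "'a::euclidean_space \<Rightarrow> ennreal"
  assumes [measurable]: "f \<in> borel_measurable borel" and c: "c \<noteq> 0"
  shows "(\<integral>\<^sup>+x. f x \<partial>lborel) = ennreal (\<bar>c\<bar>^DIM('a)) * (\<integral>\<^sup>+x. f (t + c *\<^sub>R x) \<partial>lborel)"
proof -
  have m: "(\<lambda>x. t + c *\<^sub>R x) \<in> borel_measurable (lborel::'a measure)" by measurable
  have "(\<integral>\<^sup>+x. f x \<partial>lborel) = (\<integral>\<^sup>+x. f x \<partial>(density (distr lborel borel (\<lambda>x. t + c *\<^sub>R x)) (\<lambda>_. \<bar>c\<bar>^DIM('a))))"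
    using lborel_affine[OF c, of t] by simp
  also have "\<dots> = (\<integral>\<^sup>+x. ennreal (\<bar>c\<bar>^DIM('a)) * f x \<partial>(distr lborel borel (\<lambda>x. t + c *\<^sub>R x)))"
    by (subst nn_integral_density) auto
  also have "\<dots> = (\<integral>\<^sup>+x. ennreal (\<bar>c\<bar>^DIM('a)) * f (t + c *\<^sub>R x) \<partial>lborel)"
    by (subst nn_integral_distr) (auto simp: m)
  also have "\<dots> = ennreal (\<bar>c\<bar>^DIM('a)) * (\<integral>\<^sup>+x. f (t + c *\<^sub>R x) \<partial>lborel)"
    by (rule nn_integral_cmult) (use m in measurable)
  finally show ?thesis .
qed

lemma gauss_1d: "(\<integral>\<^sup>+x. ennreal (exp (- pi * x ^ 2)) \<partial>(lborel::real measure)) = 1"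
proof -
  define \<sigma> where "\<sigma> = 1 / sqrt (2 * pi)"
  have \<sigma>: "\<sigma> > 0" unfolding \<sigma>_def by simp
  have eq: "normal_density 0 \<sigma> x = exp (- pi * x ^ 2)" for x
    unfolding normal_density_def \<sigma>_def by (simp add: power_divide real_sqrt_mult power_mult_distrib)
  interpret prob_space "density lborel (\<lambda>x. ennreal (normal_density 0 \<sigma> x))"
    using prob_space_normal_density[OF \<sigma>] .
  have "emeasure (density lborel (\<lambda>x. ennreal (normal_density 0 \<sigma> x))) UNIV = 1"
    using emeasure_space_1 by simp
  then show ?thesis
    by (simp add: emeasure_density eq)
qed

lemma gauss_mass: "(\<integral>\<^sup>+x. phi x \<partial>(lborel::'a::euclidean_space measure)) = 1"
proof -
  have eq: "phi x = (\<Prod>b\<in>(Basis::'a set). ennreal (exp (- pi * (x \<bullet> b) ^ 2)))" for x :: 'a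
  proof -
    have "norm x ^ 2 = (\<Sum>b\<in>(Basis::'a set). (x \<bullet> b) ^ 2)"
      unfolding power2_norm_eq_inner by (subst euclidean_inner) (simp add: power2_eq_square)
    then have "- pi * norm x ^ 2 = (\<Sum>b\<in>(Basis::'a set). - pi * (x \<bullet> b) ^ 2)"
      by (simp add: sum_distrib_left)
    then have "exp (- pi * norm x ^ 2) = (\<Prod>b\<in>(Basis::'a set). exp (- pi * (x \<bullet> b) ^ 2))"
      by (simp add: exp_sum)
    then show ?thesis unfolding phi_def by (subst prod_ennreal) auto
  qed
  have "(\<integral>\<^sup>+x. phi x \<partial>(lborel::'a measure)) = (\<integral>\<^sup>+x. (\<Prod>b\<in>(Basis::'a set). ennreal (exp (- pi * (x \<bullet> b) ^ 2))) \<partial>lborel)"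
    by (simp only: eq)
  also have "\<dots> = (\<Prod>b\<in>(Basis::'a set). (\<integral>\<^sup>+x. ennreal (exp (- pi * x ^ 2)) \<partial>lborel))"
    by (rule nn_integral_lborel_prod) auto
  also have "\<dots> = 1" using gauss_1d by simp
  finally show ?thesis .
qed


lemma phi_affine_integral:
  assumes c: "c \<noteq> 0"
  shows "(\<integral>\<^sup>+x. phi (t + c *\<^sub>R x) \<partial>(lborel::'a::euclidean_space measure)) = ennreal (1 / \<bar>c\<bar>^DIM('a))"
proof -
  have "1 = ennreal (\<bar>c\<bar>^DIM('a)) * (\<integral>\<^sup>+x. phi (t + c *\<^sub>R x) \<partial>(lborel::'a measure))"
    using nn_integral_affine_eucl[OF phi_measurable c, of t] gauss_mass by metis
  then have "ennreal (1 / \<bar>c\<bar>^DIM('a)) * 1 = ennreal (1 / \<bar>c\<bar>^DIM('a)) * ennreal (\<bar>c\<bar>^DIM('a)) * (\<integral>\<^sup>+x. phi (t + c *\<^sub>R x) \<partial>(lborel::'a measure))"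
    by (simp add: mult.assoc)
  also have "ennreal (1 / \<bar>c\<bar>^DIM('a)) * ennreal (\<bar>c\<bar>^DIM('a)) = 1"
    using c by (simp add: ennreal_mult'[symmetric])
  finally show ?thesis by simp
qed

lemma phi_conv:
  fixes v :: "'a::euclidean_space"
  shows "(\<integral>\<^sup>+x. phi x * phi (v - x) \<partial>lborel) = ennreal (exp (- pi * norm v ^ 2 / 2)) * ennreal (1 / sqrt 2 ^ DIM('a))"
proof -
  have pw: "phi x * phi (v - x) = ennreal (exp (- pi * norm v ^ 2 / 2)) * phi (- (sqrt 2 / 2) *\<^sub>R v + sqrt 2 *\<^sub>R x)" for x
  proof -
    have s2: "sqrt 2 * sqrt 2 = (2::real)" by simp
    have N: "norm x ^ 2 + norm (v - x) ^ 2 = norm v ^ 2 / 2 + norm (- (sqrt 2 / 2) *\<^sub>R v + sqrt 2 *\<^sub>R x) ^ 2"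
      unfolding power2_norm_eq_inner by (simp add: inner_simps inner_commute algebra_simps s2)
    have "exp (- pi * norm x ^ 2) * exp (- pi * norm (v - x) ^ 2) = exp (- pi * norm v ^ 2 / 2) * exp (- pi * norm (- (sqrt 2 / 2) *\<^sub>R v + sqrt 2 *\<^sub>R x) ^ 2)"
      using arg_cong[OF N, of "\<lambda>z. pi * z"] by (simp add: exp_add[symmetric] algebra_simps)
    then show ?thesis unfolding phi_def by (simp add: ennreal_mult'[symmetric])
  qed
  have "(\<integral>\<^sup>+x. phi x * phi (v - x) \<partial>lborel) = (\<integral>\<^sup>+x. ennreal (exp (- pi * norm v ^ 2 / 2)) * phi (- (sqrt 2 / 2) *\<^sub>R v + sqrt 2 *\<^sub>R x) \<partial>lborel)"
    by (simp only: pw)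
  also have "\<dots> = ennreal (exp (- pi * norm v ^ 2 / 2)) * (\<integral>\<^sup>+x. phi (- (sqrt 2 / 2) *\<^sub>R v + sqrt 2 *\<^sub>R x) \<partial>lborel)"
    by (rule nn_integral_cmult) measurable
  also have "\<dots> = ennreal (exp (- pi * norm v ^ 2 / 2)) * ennreal (1 / sqrt 2 ^ DIM('a))"
    by (subst phi_affine_integral) auto
  finally show ?thesis .
qed


lemma rot:
  fixes f :: "'a::euclidean_space \<Rightarrow> ennreal"
  assumes [measurable]: "f \<in> borel_measurable borel"
  shows "(\<integral>\<^sup>+x. \<integral>\<^sup>+y. f ((1 / sqrt 2) *\<^sub>R (x + y)) * phi x * phi y \<partial>lborel \<partial>lborel)
       = (\<integral>\<^sup>+u. f u * phi u \<partial>lborel)"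
proof -
  define s :: real where "s = sqrt 2"
  have s0: "s \<noteq> 0" "s > 0" unfolding s_def by auto
  have inner: "(\<integral>\<^sup>+y. f ((1 / sqrt 2) *\<^sub>R (x + y)) * phi x * phi y \<partial>lborel)
      = ennreal (s ^ DIM('a)) * (\<integral>\<^sup>+u. f u * phi x * phi (s *\<^sub>R u - x) \<partial>lborel)" for x :: 'a
  proof -
    have "(\<integral>\<^sup>+y. f ((1 / sqrt 2) *\<^sub>R (x + y)) * phi x * phi y \<partial>lborel)
      = ennreal (\<bar>s\<bar> ^ DIM('a)) * (\<integral>\<^sup>+u. f ((1 / sqrt 2) *\<^sub>R (x + (- x + s *\<^sub>R u))) * phi x * phi (- x + s *\<^sub>R u) \<partial>lborel)"
      by (rule nn_integral_affine_eucl[OF _ s0(1)]) measurable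
    also have "(\<lambda>u. f ((1 / sqrt 2) *\<^sub>R (x + (- x + s *\<^sub>R u))) * phi x * phi (- x + s *\<^sub>R u)) = (\<lambda>u. f u * phi x * phi (s *\<^sub>R u - x))"
      using s0 by (auto simp: s_def)
    finally show ?thesis using s0 by simp
  qed
  have "(\<integral>\<^sup>+x. \<integral>\<^sup>+y. f ((1 / sqrt 2) *\<^sub>R (x + y)) * phi x * phi y \<partial>lborel \<partial>lborel)
      = (\<integral>\<^sup>+x. ennreal (s ^ DIM('a)) * (\<integral>\<^sup>+u. f u * phi x * phi (s *\<^sub>R u - x) \<partial>lborel) \<partial>lborel)"
    by (simp only: inner)
  also have "\<dots> = ennreal (s ^ DIM('a)) * (\<integral>\<^sup>+x. \<integral>\<^sup>+u. f u * phi x * phi (s *\<^sub>R u - x) \<partial>lborel \<partial>lborel)"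
    by (rule nn_integral_cmult) measurable
  also have "(\<integral>\<^sup>+x. \<integral>\<^sup>+u. f u * phi x * phi (s *\<^sub>R u - x) \<partial>lborel \<partial>lborel)
      = (\<integral>\<^sup>+u. \<integral>\<^sup>+x. f u * phi x * phi (s *\<^sub>R u - x) \<partial>lborel \<partial>lborel)"
  proof -
    have "(\<lambda>(x, u). f u * phi x * phi (s *\<^sub>R u - x)) \<in> borel_measurable (lborel \<Otimes>\<^sub>M lborel)"
      by measurable
    from lborel_pair.Fubini'[of "\<lambda>x u. f u * phi x * phi (s *\<^sub>R u - x)", OF this] show ?thesis by simp
  qed
  also have "\<dots> = (\<integral>\<^sup>+u. f u * (\<integral>\<^sup>+x. phi x * phi (s *\<^sub>R u - x) \<partial>lborel) \<partial>lborel)"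
    by (rule nn_integral_cong) (simp add: nn_integral_cmult[symmetric] mult.assoc)
  also have "\<dots> = (\<integral>\<^sup>+u. f u * (ennreal (exp (- pi * norm u ^ 2)) * ennreal (1 / s ^ DIM('a))) \<partial>lborel)"
  proof (rule nn_integral_cong)
    fix u :: 'a
    have "norm (s *\<^sub>R u) ^ 2 / 2 = norm u ^ 2"
      using s0 by (simp add: power_mult_distrib s_def)
    then show "f u * (\<integral>\<^sup>+x. phi x * phi (s *\<^sub>R u - x) \<partial>lborel) = f u * (ennreal (exp (- pi * norm u ^ 2)) * ennreal (1 / s ^ DIM('a)))"
      by (simp add: phi_conv s_def)
  qed
  also have "ennreal (s ^ DIM('a)) * \<dots> = (\<integral>\<^sup>+u. ennreal (s ^ DIM('a)) * (f u * (ennreal (exp (- pi * norm u ^ 2)) * ennreal (1 / s ^ DIM('a)))) \<partial>lborel)"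
    by (rule nn_integral_cmult[symmetric]) measurable
  also have "\<dots> = (\<integral>\<^sup>+u. f u * phi u \<partial>lborel)"
  proof (rule nn_integral_cong)
    fix u :: 'a
    have "ennreal (s ^ DIM('a)) * ennreal (1 / s ^ DIM('a)) = 1"
      using s0 by (simp add: ennreal_mult'[symmetric])
    then show "ennreal (s ^ DIM('a)) * (f u * (ennreal (exp (- pi * norm u ^ 2)) * ennreal (1 / s ^ DIM('a)))) = f u * phi u"
      unfolding phi_def by (metis (no_types, lifting) mult.commute mult.left_commute mult_1)
  qed
  finally show ?thesis .
qed


lemma amgm_ennreal: "2 * a * b \<le> a * a + b * (b::ennreal)"
proof (cases a)
  case (real r)
  then show ?thesis
  proof (cases b)
    case (real q)
    have "0 \<le> (r - q) * (r - q)" by simp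
    then have "2 * r * q \<le> r * r + q * q" by (simp add: algebra_simps)
    then have "ennreal (2 * r * q) \<le> ennreal (r * r + q * q)" by (rule ennreal_leI)
    moreover have "ennreal (2 * r * q) = 2 * a * b"
      using \<open>a = ennreal r\<close> \<open>0 \<le> r\<close> real by (simp add: ennreal_mult)
    moreover have "ennreal (r * r + q * q) = a * a + b * b"
      using \<open>a = ennreal r\<close> \<open>0 \<le> r\<close> real by (simp add: ennreal_mult ennreal_plus)
    ultimately show ?thesis by simp
  qed simp
qed simp

lemma reflect_integral:
  fixes F :: "'a::euclidean_space \<Rightarrow> ennreal"
  assumes [measurable]: "F \<in> borel_measurable borel"
  shows "(\<integral>\<^sup>+z. F (- z) \<partial>lborel) = (\<integral>\<^sup>+z. F z \<partial>lborel)"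
  using nn_integral_affine_eucl[OF assms, of "-1" 0] by simp

lemma core:
  fixes A H :: "'a::euclidean_space set"
  assumes A[measurable]: "A \<in> sets borel" and H[measurable]: "H \<in> sets borel"
    and AH: "\<And>a b. a \<in> A \<Longrightarrow> b \<in> A \<Longrightarrow> a - b \<in> H"
  shows "(\<integral>\<^sup>+x. indicator A x * phi x \<partial>lborel) ^ 2 \<le> (\<integral>\<^sup>+x. indicator H x * phi x \<partial>lborel)"
proof -
  define s :: real where "s = sqrt 2"
  define g where "g = (\<integral>\<^sup>+x. indicator A x * phi x \<partial>lborel)"
  define G where "G = (\<integral>\<^sup>+x. indicator H x * phi x \<partial>lborel)"
  define h where "h x = (\<integral>\<^sup>+y. indicator A ((1 / s) *\<^sub>R (x + y)) * phi y \<partial>lborel)" for x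
  have hm[measurable]: "h \<in> borel_measurable borel"
    unfolding h_def by measurable
  have gle: "g \<le> 1"
  proof -
    have "g \<le> (\<integral>\<^sup>+x. phi x \<partial>(lborel::'a measure))"
      unfolding g_def by (rule nn_integral_mono) (simp add: indicator_def)
    then show ?thesis using gauss_mass[where 'a='a] by simp
  qed
  then have gfin: "g \<noteq> \<infinity>" by (cases g) (auto simp: top_unique)
  have int_h: "(\<integral>\<^sup>+x. phi x * h x \<partial>lborel) = g"
  proof -
    have "(\<integral>\<^sup>+x. phi x * h x \<partial>lborel) = (\<integral>\<^sup>+x. \<integral>\<^sup>+y. indicator A ((1 / sqrt 2) *\<^sub>R (x + y)) * phi x * phi y \<partial>lborel \<partial>lborel)"
      unfolding h_def s_def
      by (rule nn_integral_cong) (simp add: nn_integral_cmult[symmetric] mult.assoc mult.left_commute)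
    also have "\<dots> = g" unfolding g_def by (rule rot) measurable
    finally show ?thesis .
  qed
  have hh: "h x * h x \<le> G" for x
  proof -
    have "h x * h x = (\<integral>\<^sup>+y. \<integral>\<^sup>+z. (indicator A ((1 / s) *\<^sub>R (x + y)) * phi y) * (indicator A ((1 / s) *\<^sub>R (x + z)) * phi z) \<partial>lborel \<partial>lborel)"
    proof -
      define I where "I y = indicator A ((1 / s) *\<^sub>R (x + y)) * phi y" for y
      have Im[measurable]: "I \<in> borel_measurable borel" unfolding I_def by measurable
      have hI: "h x = (\<integral>\<^sup>+y. I y \<partial>lborel)" unfolding h_def I_def ..
      then have "h x * h x = (\<integral>\<^sup>+y. I y * h x \<partial>lborel)"
        by (simp add: nn_integral_multc)
      also have "\<dots> = (\<integral>\<^sup>+y. \<integral>\<^sup>+z. I y * I z \<partial>lborel \<partial>lborel)"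
        using hI by (simp add: nn_integral_cmult)
      finally show ?thesis unfolding I_def .
    qed
    also have "\<dots> \<le> (\<integral>\<^sup>+y. \<integral>\<^sup>+z. indicator H ((1 / s) *\<^sub>R (y + (- z))) * phi y * phi (- (- z)) \<partial>lborel \<partial>lborel)"
    proof (intro nn_integral_mono)
      fix y z :: 'a
      have "(1 / s) *\<^sub>R (x + y) - (1 / s) *\<^sub>R (x + z) = (1 / s) *\<^sub>R (y + (- z))"
        by (simp add: algebra_simps)
      then show "(indicator A ((1 / s) *\<^sub>R (x + y)) * phi y) * (indicator A ((1 / s) *\<^sub>R (x + z)) * phi z)
          \<le> indicator H ((1 / s) *\<^sub>R (y + (- z))) * phi y * phi (- (- z))"
        using AH[of "(1 / s) *\<^sub>R (x + y)" "(1 / s) *\<^sub>R (x + z)"]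
        by (auto simp: indicator_def)
    qed
    also have "\<dots> = (\<integral>\<^sup>+y. \<integral>\<^sup>+z. indicator H ((1 / s) *\<^sub>R (y + z)) * phi y * phi z \<partial>lborel \<partial>lborel)"
    proof (rule nn_integral_cong)
      fix y :: 'a
      have "(\<integral>\<^sup>+z. (\<lambda>w. indicator H ((1 / s) *\<^sub>R (y + w)) * phi y * phi (- w)) (- z) \<partial>lborel)
          = (\<integral>\<^sup>+z. (\<lambda>w. indicator H ((1 / s) *\<^sub>R (y + w)) * phi y * phi (- w)) z \<partial>lborel)"
        by (rule reflect_integral) measurable
      then show "(\<integral>\<^sup>+z. indicator H ((1 / s) *\<^sub>R (y + (- z))) * phi y * phi (- (- z)) \<partial>lborel)
          = (\<integral>\<^sup>+z. indicator H ((1 / s) *\<^sub>R (y + z)) * phi y * phi z \<partial>lborel)"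
        by (simp add: phi_neg)
    qed
    also have "\<dots> = G" unfolding G_def s_def by (rule rot) measurable
    finally show ?thesis .
  qed
  have "2 * g * g = (\<integral>\<^sup>+x. phi x * (2 * g * h x) \<partial>lborel)"
  proof -
    have "(\<integral>\<^sup>+x. phi x * (2 * g * h x) \<partial>lborel) = (\<integral>\<^sup>+x. (2 * g) * (phi x * h x) \<partial>lborel)"
      by (simp only: mult.assoc mult.commute mult.left_commute)
    also have "\<dots> = (2 * g) * (\<integral>\<^sup>+x. phi x * h x \<partial>lborel)"
      by (rule nn_integral_cmult) measurable
    finally show ?thesis using int_h by simp
  qed
  also have "\<dots> \<le> (\<integral>\<^sup>+x. phi x * (h x * h x) + phi x * (g * g) \<partial>lborel)"
  proof (rule nn_integral_mono)
    fix x :: 'a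
    have "2 * g * h x \<le> h x * h x + g * g"
      using amgm_ennreal[of g "h x"] by (simp add: add.commute)
    then have "phi x * (2 * g * h x) \<le> phi x * (h x * h x + g * g)"
      by (rule mult_left_mono) simp
    then show "phi x * (2 * g * h x) \<le> phi x * (h x * h x) + phi x * (g * g)"
      by (simp add: distrib_left)
  qed
  also have "\<dots> = (\<integral>\<^sup>+x. phi x * (h x * h x) \<partial>lborel) + (\<integral>\<^sup>+x. phi (x::'a) * (g * g) \<partial>lborel)"
    by (subst nn_integral_add) auto
  also have "(\<integral>\<^sup>+x. phi (x::'a) * (g * g) \<partial>lborel) = g * g"
    using gauss_mass[where 'a='a] by (simp add: nn_integral_multc)
  also have "(\<integral>\<^sup>+x. phi x * (h x * h x) \<partial>lborel) \<le> (\<integral>\<^sup>+x. phi (x::'a) * G \<partial>lborel)"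
    by (rule nn_integral_mono) (simp add: hh mult_left_mono)
  also have "(\<integral>\<^sup>+x. phi (x::'a) * G \<partial>lborel) = G"
    using gauss_mass[where 'a='a] by (simp add: nn_integral_multc)
  finally have X: "2 * g * g \<le> G + g * g" by (simp add: add_right_mono)
  have "2 * g * g = g * g + g * g" by (simp add: mult_2 distrib_right)
  with X have "g * g + g * g \<le> g * g + G" by (simp add: add.commute)
  moreover have "g * g \<noteq> \<infinity>" using gfin by (simp add: ennreal_mult_eq_top_iff)
  ultimately have "g * g \<le> G" by (simp add: ennreal_add_left_cancel_le)
  then show ?thesis unfolding g_def G_def by (simp add: power2_eq_square)
qed


lemma gm_emeasure:
  assumes "X \<in> sets lebesgue"
  shows "emeasure gaussian_measure X = (\<integral>\<^sup>+x. indicator X x * phi x \<partial>lborel)"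
proof -
  have m: "phi \<in> borel_measurable (lebesgue :: 'a measure)"
    by (rule measurable_completion) (simp add: phi_measurable)
  have "emeasure gaussian_measure X = (\<integral>\<^sup>+x. phi x * indicator X x \<partial>lebesgue)"
  proof -
    have gd: "gaussian_measure = density lebesgue phi"
      unfolding gaussian_measure_def phi_def[abs_def] ..
    show ?thesis unfolding gd using emeasure_density[OF m assms] .
  qed
  also have "\<dots> = (\<integral>\<^sup>+x. indicator X x * phi x \<partial>lborel)"
    by (simp add: nn_integral_completion mult.commute)
  finally show ?thesis .
qed

lemma final:
  fixes A :: "'a::euclidean_space set"
  assumes A: "A \<in> sets borel"
    and S: "{a - b | a b. a \<in> A \<and> b \<in> A} \<in> sets lebesgue"
  shows "measure gaussian_measure {a - b | a b. a \<in> A \<and> b \<in> A} \<ge> (measure gaussian_measure A) ^ 4"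
proof -
  define D where "D = {a - b | a b. a \<in> A \<and> b \<in> A}"
  have Dl: "D \<in> sets lebesgue" using S unfolding D_def .
  obtain H where H: "D \<subseteq> H" "H \<in> sets lborel" "H - D \<in> null_sets lebesgue"
    using completion_upper[OF Dl] by metis
  have Hb[measurable]: "H \<in> sets borel" using H(2) by simp
  have Al: "A \<in> sets lebesgue" using A by simp
  have ae: "AE x in lebesgue. indicator D x * phi x = indicator H x * phi x"
  proof -
    have "AE x in lebesgue. x \<notin> H - D" using H(3) by (rule AE_not_in)
    then show ?thesis by eventually_elim (use H(1) in \<open>auto simp: indicator_def\<close>)
  qed
  have eD: "emeasure gaussian_measure D = (\<integral>\<^sup>+x. indicator H x * phi x \<partial>lborel)"
  proof -
    have "emeasure gaussian_measure D = (\<integral>\<^sup>+x. indicator D x * phi x \<partial>lebesgue)"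
      using gm_emeasure[OF Dl] by (simp add: nn_integral_completion)
    also have "\<dots> = (\<integral>\<^sup>+x. indicator H x * phi x \<partial>lebesgue)"
      by (rule nn_integral_cong_AE[OF ae])
    finally show ?thesis by (simp add: nn_integral_completion)
  qed
  have eA: "emeasure gaussian_measure A = (\<integral>\<^sup>+x. indicator A x * phi x \<partial>lborel)"
    using gm_emeasure[OF Al] .
  have c: "(emeasure gaussian_measure A) ^ 2 \<le> emeasure gaussian_measure D"
    unfolding eA eD by (rule core[OF A Hb]) (use H(1) in \<open>auto simp: D_def\<close>)
  have le1: "emeasure gaussian_measure A \<le> 1"
  proof -
    have "(\<integral>\<^sup>+x. indicator A x * phi x \<partial>lborel) \<le> (\<integral>\<^sup>+x. phi x \<partial>(lborel::'a measure))"
      by (rule nn_integral_mono) (simp add: indicator_def)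
    then show ?thesis using gauss_mass[where 'a='a] eA by simp
  qed
  have le1D: "emeasure gaussian_measure D \<le> 1"
  proof -
    have "(\<integral>\<^sup>+x. indicator H x * phi x \<partial>lborel) \<le> (\<integral>\<^sup>+x. phi x \<partial>(lborel::'a measure))"
      by (rule nn_integral_mono) (simp add: indicator_def)
    then show ?thesis using gauss_mass[where 'a='a] eD by simp
  qed
  define a where "a = measure gaussian_measure A"
  define d where "d = measure gaussian_measure D"
  have ea: "emeasure gaussian_measure A = ennreal a"
    unfolding a_def using le1 by (intro emeasure_eq_ennreal_measure) (cases "emeasure gaussian_measure A"; auto simp: top_unique)
  have ed: "emeasure gaussian_measure D = ennreal d"
    unfolding d_def using le1D by (intro emeasure_eq_ennreal_measure) (cases "emeasure gaussian_measure D"; auto simp: top_unique)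
  have a0: "0 \<le> a" "a \<le> 1" using le1 ea unfolding a_def by auto
  have "ennreal (a ^ 2) \<le> ennreal d" using c ea ed a0 by (simp add: ennreal_power)
  then have "a ^ 2 \<le> d" using measure_nonneg[of gaussian_measure D] unfolding d_def
    by (simp add: ennreal_le_iff)
  moreover have "a ^ 4 \<le> a ^ 2" using a0 by (simp add: power_decreasing)
  ultimately show ?thesis unfolding a_def d_def D_def by simp
qed


lemma tendsto_fun_iff:
  fixes f :: "'x \<Rightarrow> 'i \<Rightarrow> 'b::topological_space"
  shows "(f \<longlongrightarrow> l) F \<longleftrightarrow> (\<forall>i. ((\<lambda>x. f x i) \<longlongrightarrow> l i) F)"
proof -
  have "limitin (product_topology (\<lambda>_. euclidean) UNIV) f l F \<longleftrightarrow>
        (\<forall>i\<in>UNIV. limitin euclidean (\<lambda>c. f c i) (l i) F)"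
    by (subst limitin_componentwise) simp
  then show ?thesis by (simp add: euclidean_product_topology)
qed

definition unp :: "nat \<Rightarrow> (nat \<Rightarrow> 'a) \<Rightarrow> (nat \<Rightarrow> 'a)" where
  "unp n \<sigma> = (\<lambda>i. \<sigma> (prod_encode (n, i)))"

definition pk :: "(nat \<Rightarrow> nat \<Rightarrow> 'a) \<Rightarrow> (nat \<Rightarrow> 'a)" where
  "pk \<tau> = (\<lambda>k. \<tau> (fst (prod_decode k)) (snd (prod_decode k)))"

lemma unp_pk[simp]: "unp n (pk \<tau>) = \<tau> n"
  unfolding unp_def pk_def by simp

lemma tendsto_unp:
  fixes f :: "'x \<Rightarrow> nat \<Rightarrow> 'b::topological_space"
  shows "(f \<longlongrightarrow> l) F \<Longrightarrow> ((\<lambda>x. unp n (f x)) \<longlongrightarrow> unp n l) F"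
  unfolding unp_def tendsto_fun_iff by auto

lemma continuous_on_unp: "continuous_on S (unp n :: (nat \<Rightarrow> 'b::topological_space) \<Rightarrow> _)"
  unfolding unp_def by (intro continuous_on_coordinatewise_then_product continuous_on_subset[OF continuous_on_product_coordinates] subset_UNIV)

lemma closed_seqD:
  fixes S :: "'a::first_countable_topology set"
  assumes "closed S" "\<And>n. x n \<in> S" "x \<longlonglongrightarrow> l" shows "l \<in> S"
  using assms unfolding closed_sequential_limits by auto

definition analytic :: "'a::euclidean_space set \<Rightarrow> bool" where
  "analytic S \<longleftrightarrow> (\<exists>F (g::(nat \<Rightarrow> 'a) \<Rightarrow> 'a). closed F \<and> continuous_on F g \<and> S = g ` F)"

lemma analyticI:
  fixes F :: "(nat \<Rightarrow> 'a::euclidean_space) set" and g :: "(nat \<Rightarrow> 'a) \<Rightarrow> 'a"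
  assumes "closed F" "continuous_on F g" "S = g ` F" shows "analytic S"
  unfolding analytic_def using assms by (intro exI[of _ F] exI[of _ g]) simp

lemma analytic_closed:
  fixes C :: "'a::euclidean_space set"
  assumes "closed C" shows "analytic C"
proof (rule analyticI)
  show "closed ((\<lambda>\<sigma>::nat \<Rightarrow> 'a. \<sigma> 0) -` C)"
    using continuous_closed_preimage[OF continuous_on_product_coordinates closed_UNIV assms] by simp
  show "continuous_on ((\<lambda>\<sigma>::nat \<Rightarrow> 'a. \<sigma> 0) -` C) (\<lambda>\<sigma>. \<sigma> 0)"
    by (rule continuous_on_subset[OF continuous_on_product_coordinates]) simp
  show "C = (\<lambda>\<sigma>::nat \<Rightarrow> 'a. \<sigma> 0) ` ((\<lambda>\<sigma>. \<sigma> 0) -` C)"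
  proof (safe)
    fix c assume "c \<in> C"
    then show "c \<in> (\<lambda>\<sigma>::nat \<Rightarrow> 'a. \<sigma> 0) ` ((\<lambda>\<sigma>. \<sigma> 0) -` C)"
      by (intro image_eqI[of _ _ "\<lambda>_. c"]) auto
  qed
qed

lemma analytic_INT:
  fixes S :: "nat \<Rightarrow> 'a::euclidean_space set"
  assumes "\<And>n. analytic (S n)"
  shows "analytic (\<Inter>n. S n)"
proof -
  have "\<forall>n. \<exists>F (g::(nat \<Rightarrow> 'a) \<Rightarrow> 'a). closed F \<and> continuous_on F g \<and> S n = g ` F"
    using assms unfolding analytic_def by (intro allI) simp
  then obtain F :: "nat \<Rightarrow> (nat \<Rightarrow> 'a) set" and G :: "nat \<Rightarrow> (nat \<Rightarrow> 'a) \<Rightarrow> 'a" where FG': "\<forall>n. closed (F n) \<and> continuous_on (F n) (G n) \<and> S n = G n ` F n"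
    unfolding choice_iff by (elim exE) (rule that, assumption)
  then have FG: "\<And>n. closed (F n)" "\<And>n. continuous_on (F n) (G n)" "\<And>n. S n = G n ` F n"
    by auto
  define D where "D = {\<sigma>::nat \<Rightarrow> 'a. \<forall>n. unp n \<sigma> \<in> F n \<and> G n (unp n \<sigma>) = G 0 (unp 0 \<sigma>)}"
  show ?thesis
  proof (rule analyticI[of D "\<lambda>\<sigma>. G 0 (unp 0 \<sigma>)"])
    show "closed D"
      unfolding closed_sequential_limits
    proof (intro allI impI, elim conjE)
      fix x l assume x: "\<forall>j. x j \<in> D" and l: "x \<longlonglongrightarrow> l"
      show "l \<in> D" unfolding D_def mem_Collect_eq
      proof (intro allI conjI)
        fix n
        have tn: "(\<lambda>j. unp n (x j)) \<longlonglongrightarrow> unp n l" by (rule tendsto_unp[OF l])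
        have t0: "(\<lambda>j. unp 0 (x j)) \<longlonglongrightarrow> unp 0 l" by (rule tendsto_unp[OF l])
        have inn: "\<forall>j. unp n (x j) \<in> F n" "\<forall>j. unp 0 (x j) \<in> F 0" using x unfolding D_def by auto
        show ln: "unp n l \<in> F n" using closed_seqD[OF FG(1) _ tn] inn(1) by auto
        have l0: "unp 0 l \<in> F 0" using closed_seqD[OF FG(1) _ t0] inn(2) by auto
        have "(\<lambda>j. G n (unp n (x j))) \<longlonglongrightarrow> G n (unp n l)"
          by (rule continuous_on_tendsto_compose[OF FG(2) tn ln]) (use inn in auto)
        moreover have "(\<lambda>j. G 0 (unp 0 (x j))) \<longlonglongrightarrow> G 0 (unp 0 l)"
          by (rule continuous_on_tendsto_compose[OF FG(2) t0 l0]) (use inn in auto)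
        moreover have "(\<lambda>j. G n (unp n (x j))) = (\<lambda>j. G 0 (unp 0 (x j)))"
          using x unfolding D_def by auto
        ultimately show "G n (unp n l) = G 0 (unp 0 l)" using LIMSEQ_unique by auto
      qed
    qed
    show "continuous_on D (\<lambda>\<sigma>. G 0 (unp 0 \<sigma>))"
      by (rule continuous_on_compose2[OF FG(2)[of 0] continuous_on_unp]) (auto simp: D_def)
    show "(\<Inter>n. S n) = (\<lambda>\<sigma>. G 0 (unp 0 \<sigma>)) ` D"
    proof safe
      fix y assume y: "y \<in> (\<Inter>n. S n)"
      have "\<forall>n. \<exists>t. t \<in> F n \<and> G n t = y"
      proof
        fix n
        have "y \<in> G n ` F n" using y FG(3) by auto
        then show "\<exists>t. t \<in> F n \<and> G n t = y" by auto
      qed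
      then obtain \<tau> :: "nat \<Rightarrow> nat \<Rightarrow> 'a" where \<tau>': "\<forall>n. \<tau> n \<in> F n \<and> G n (\<tau> n) = y"
        unfolding choice_iff by (elim exE) (rule that, assumption)
      then have \<tau>: "\<And>n. \<tau> n \<in> F n" "\<And>n. G n (\<tau> n) = y" by auto
      show "y \<in> (\<lambda>\<sigma>. G 0 (unp 0 \<sigma>)) ` D"
        by (rule image_eqI[of _ _ "pk \<tau>"]) (auto simp: D_def \<tau>)
    next
      fix \<sigma> n assume "\<sigma> \<in> D"
      then have "unp n \<sigma> \<in> F n" "G n (unp n \<sigma>) = G 0 (unp 0 \<sigma>)" unfolding D_def by auto
      then show "G 0 (unp 0 \<sigma>) \<in> S n" unfolding FG(3) by (metis image_eqI)
    qed
  qed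
qed


definition eb :: "'a::euclidean_space" where "eb = (SOME i. i \<in> Basis)"

lemma eb_inner[simp]: "(eb::'a::euclidean_space) \<bullet> eb = 1"
  unfolding eb_def by (simp add: SOME_Basis)

lemma nat_real_close: "\<bar>real a - real b\<bar> < 1 \<Longrightarrow> a = b"
  by linarith

lemma eventually_const_index:
  fixes X :: "nat \<Rightarrow> 'a::euclidean_space"
  assumes X: "X \<longlonglongrightarrow> x" and Xn: "\<And>j. X j = real (n j) *\<^sub>R eb"
  shows "\<exists>N. eventually (\<lambda>j. n j = N) sequentially \<and> x = real N *\<^sub>R eb"
proof -
  have "(\<lambda>j. X j \<bullet> eb) \<longlonglongrightarrow> x \<bullet> eb"
    by (intro tendsto_intros X)
  then have t: "(\<lambda>j. real (n j)) \<longlonglongrightarrow> x \<bullet> eb" using Xn by simp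
  have "eventually (\<lambda>j. dist (real (n j)) (x \<bullet> eb) < 1/2) sequentially"
    using tendstoD[OF t, of "1/2"] by simp
  then obtain j0 where j0: "\<And>j. j \<ge> j0 \<Longrightarrow> dist (real (n j)) (x \<bullet> eb) < 1/2"
    unfolding eventually_sequentially by auto
  have ev: "eventually (\<lambda>j. n j = n j0) sequentially"
    unfolding eventually_sequentially
  proof (intro exI[of _ j0] allI impI)
    fix j assume "j0 \<le> j"
    from j0[OF this] j0[OF order_refl] have "\<bar>real (n j) - real (n j0)\<bar> < 1"
      unfolding dist_real_def by linarith
    then show "n j = n j0" by (rule nat_real_close)
  qed
  have "eventually (\<lambda>j. X j = real (n j0) *\<^sub>R eb) sequentially"
    using ev by eventually_elim (simp add: Xn)
  then have "X \<longlonglongrightarrow> real (n j0) *\<^sub>R eb" by (rule tendsto_eventually)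
  then have "x = real (n j0) *\<^sub>R eb" using X LIMSEQ_unique by auto
  with ev show ?thesis by auto
qed

definition shft :: "(nat \<Rightarrow> 'a) \<Rightarrow> (nat \<Rightarrow> 'a)" where
  "shft \<sigma> = (\<lambda>i. \<sigma> (Suc i))"

lemma tendsto_shft:
  fixes f :: "'x \<Rightarrow> nat \<Rightarrow> 'b::topological_space"
  shows "(f \<longlongrightarrow> l) F \<Longrightarrow> ((\<lambda>x. shft (f x)) \<longlongrightarrow> shft l) F"
  unfolding shft_def tendsto_fun_iff by auto

lemma analytic_UN:
  fixes S :: "nat \<Rightarrow> 'a::euclidean_space set"
  assumes "\<And>n. analytic (S n)"
  shows "analytic (\<Union>n. S n)"
proof -
  have "\<forall>n. \<exists>F (g::(nat \<Rightarrow> 'a) \<Rightarrow> 'a). closed F \<and> continuous_on F g \<and> S n = g ` F"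
    using assms unfolding analytic_def by (intro allI) simp
  then obtain F :: "nat \<Rightarrow> (nat \<Rightarrow> 'a) set" and G :: "nat \<Rightarrow> (nat \<Rightarrow> 'a) \<Rightarrow> 'a" where FG': "\<forall>n. closed (F n) \<and> continuous_on (F n) (G n) \<and> S n = G n ` F n"
    unfolding choice_iff by (elim exE) (rule that, assumption)
  then have FG: "\<And>n. closed (F n)" "\<And>n. continuous_on (F n) (G n)" "\<And>n. S n = G n ` F n"
    by auto
  define idx :: "(nat \<Rightarrow> 'a) \<Rightarrow> nat" where "idx \<sigma> = nat (round (\<sigma> 0 \<bullet> eb))" for \<sigma>
  have idx: "idx \<sigma> = n" if "\<sigma> 0 = real n *\<^sub>R eb" for \<sigma> n
    using that unfolding idx_def by simp
  define D where "D = {\<sigma>::nat \<Rightarrow> 'a. \<exists>n. \<sigma> 0 = real n *\<^sub>R eb \<and> shft \<sigma> \<in> F n}"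
  have D: "\<sigma> 0 = real (idx \<sigma>) *\<^sub>R eb" "shft \<sigma> \<in> F (idx \<sigma>)" if "\<sigma> \<in> D" for \<sigma>
    using that idx unfolding D_def by auto
  define g where "g \<sigma> = G (idx \<sigma>) (shft \<sigma>)" for \<sigma>
  have key: "\<exists>N. eventually (\<lambda>j. idx (x j) = N) sequentially \<and> idx l = N \<and> l 0 = real N *\<^sub>R eb"
    if x: "\<And>j. x j \<in> D" and l: "x \<longlonglongrightarrow> l" for x l
  proof -
    have "(\<lambda>j. x j 0) \<longlonglongrightarrow> l 0" using l unfolding tendsto_fun_iff by auto
    from eventually_const_index[OF this D(1)[OF x]] obtain N where
      "eventually (\<lambda>j. idx (x j) = N) sequentially" "l 0 = real N *\<^sub>R eb" by auto
    then show ?thesis using idx by auto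
  qed
  show ?thesis
  proof (rule analyticI[of D g])
    show "closed D"
      unfolding closed_sequential_limits
    proof (intro allI impI, elim conjE)
      fix x l assume x: "\<forall>j. x j \<in> D" and l: "x \<longlonglongrightarrow> l"
      from key[of x l] x l obtain N where N: "eventually (\<lambda>j. idx (x j) = N) sequentially" "l 0 = real N *\<^sub>R eb"
        by auto
      have "eventually (\<lambda>j. shft (x j) \<in> F N) sequentially"
        using N(1) by eventually_elim (use D(2) x in auto)
      then have "shft l \<in> F N"
        by (rule Lim_in_closed_set[OF FG(1)]) (auto intro: tendsto_shft l)
      then show "l \<in> D" unfolding D_def using N(2) by auto
    qed
    show "continuous_on D g"
      unfolding continuous_on_sequentially
    proof (intro allI ballI impI, elim conjE)
      fix x a assume a: "a \<in> D" and x: "\<forall>j. x j \<in> D" and l: "x \<longlonglongrightarrow> a"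
      from key[of x a] x l obtain N where N: "eventually (\<lambda>j. idx (x j) = N) sequentially" "idx a = N"
        by auto
      have ev: "eventually (\<lambda>j. shft (x j) \<in> F N) sequentially"
        using N(1) by eventually_elim (use D(2) x in auto)
      have "(\<lambda>j. G N (shft (x j))) \<longlonglongrightarrow> G N (shft a)"
        by (rule continuous_on_tendsto_compose[OF FG(2) tendsto_shft[OF l]]) (use D(2)[OF a] N(2) ev in auto)
      moreover have "eventually (\<lambda>j. G N (shft (x j)) = (g \<circ> x) j) sequentially"
        using N(1) by eventually_elim (simp add: g_def)
      ultimately have "(g \<circ> x) \<longlonglongrightarrow> G N (shft a)" by (rule Lim_transform_eventually)
      then show "(g \<circ> x) \<longlonglongrightarrow> g a" using N(2) by (simp add: g_def)
    qed
    show "(\<Union>n. S n) = g ` D"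
    proof safe
      fix y n assume "y \<in> S n"
      then obtain \<tau> where \<tau>: "\<tau> \<in> F n" "y = G n \<tau>" using FG(3) by auto
      define \<sigma> :: "nat \<Rightarrow> 'a" where "\<sigma> i = (case i of 0 \<Rightarrow> real n *\<^sub>R eb | Suc k \<Rightarrow> \<tau> k)" for i
      have s0: "\<sigma> 0 = real n *\<^sub>R eb" and ss: "shft \<sigma> = \<tau>"
        unfolding \<sigma>_def shft_def by auto
      have "\<sigma> \<in> D" unfolding D_def using s0 ss \<tau> by auto
      moreover have "g \<sigma> = y" unfolding g_def using idx[of \<sigma> n, OF s0] ss \<tau> by simp
      ultimately show "y \<in> g ` D" by auto
    next
      fix \<sigma> assume "\<sigma> \<in> D"
      then have "g \<sigma> \<in> S (idx \<sigma>)" unfolding g_def FG(3) using D by auto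
      then show "g \<sigma> \<in> (\<Union>n. S n)" by auto
    qed
  qed
qed


lemma analytic_open:
  fixes U :: "'a::euclidean_space set"
  assumes U: "open U" shows "analytic U"
proof (cases "U = UNIV")
  case True then show ?thesis by (simp add: analytic_closed)
next
  case False
  define C where "C n = {x. inverse (real (Suc n)) \<le> infdist x (- U)}" for n
  have "closed (C n)" for n
    unfolding C_def by (intro closed_Collect_le continuous_on_const continuous_on_infdist continuous_on_id)
  then have an: "analytic (C n)" for n by (rule analytic_closed)
  have "U = (\<Union>n. C n)"
  proof safe
    fix x assume "x \<in> U"
    then have "infdist x (- U) > 0"
      using False U by (intro infdist_pos_not_in_closed) auto
    then obtain n where "n > 0" "inverse (real n) < infdist x (- U)"
      using ex_inverse_of_nat_less[OF \<open>infdist x (- U) > 0\<close>] by auto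
    then have "x \<in> C (n - 1)" unfolding C_def by simp
    then show "x \<in> (\<Union>n. C n)" by blast
  next
    fix x n assume "x \<in> C n"
    then have "inverse (real (Suc n)) \<le> infdist x (- U)" by (simp add: C_def)
    moreover have "0 < inverse (real (Suc n))" by simp
    ultimately have "infdist x (- U) > 0" by linarith
    then show "x \<in> U" using infdist_zero[of x "- U"] by (cases "x \<in> U") auto
  qed
  then show ?thesis using analytic_UN[OF an] by simp
qed

lemma analytic_borel:
  fixes B :: "'a::euclidean_space set"
  assumes "B \<in> sets borel" shows "analytic B \<and> analytic (- B)"
  using assms unfolding sets_borel
proof (induction rule: sigma_sets.induct)
  case (Basic a)
  then show ?case by (simp add: analytic_open analytic_closed closed_Compl)
next
  case Empty
  show ?case by (simp add: analytic_closed)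
next
  case (Compl a)
  then show ?case by (simp add: Compl_eq_Diff_UNIV[symmetric])
next
  case (Union a)
  have "analytic (\<Union>i. a i)" using Union by (intro analytic_UN) auto
  moreover have "analytic (\<Inter>i. - a i)" using Union by (intro analytic_INT) auto
  ultimately show ?case by simp
qed

lemma analytic_minus:
  fixes A :: "'a::euclidean_space set"
  assumes "analytic A"
  shows "analytic {a - b | a b. a \<in> A \<and> b \<in> A}"
proof -
  obtain F :: "(nat \<Rightarrow> 'a) set" and G :: "(nat \<Rightarrow> 'a) \<Rightarrow> 'a" where FG: "closed F" "continuous_on F G" "A = G ` F"
    using assms unfolding analytic_def by (elim exE conjE) (rule that)
  define D where "D = {\<sigma>::nat \<Rightarrow> 'a. unp 0 \<sigma> \<in> F \<and> unp 1 \<sigma> \<in> F}"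
  define h where "h \<sigma> = G (unp 0 \<sigma>) - G (unp 1 \<sigma>)" for \<sigma>
  show ?thesis
  proof (rule analyticI[of D h])
    have De: "D = (UNIV \<inter> unp 0 -` F) \<inter> (UNIV \<inter> unp 1 -` F)" unfolding D_def by auto
    show "closed D" unfolding De
      by (intro closed_Int continuous_closed_preimage[OF continuous_on_unp closed_UNIV FG(1)])
    show "continuous_on D h" unfolding h_def
      by (intro continuous_on_diff continuous_on_compose2[OF FG(2) continuous_on_unp]) (auto simp: D_def)
    show "{a - b | a b. a \<in> A \<and> b \<in> A} = h ` D"
    proof safe
      fix a b assume "a \<in> A" "b \<in> A"
      then obtain \<tau>0 \<tau>1 where t: "\<tau>0 \<in> F" "a = G \<tau>0" "\<tau>1 \<in> F" "b = G \<tau>1" using FG(3) by auto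
      define \<sigma> where "\<sigma> = pk (\<lambda>n. if n = 0 then \<tau>0 else \<tau>1)"
      have "unp 0 \<sigma> = \<tau>0" "unp 1 \<sigma> = \<tau>1" unfolding \<sigma>_def by auto
      then show "a - b \<in> h ` D" using t unfolding h_def D_def by (intro image_eqI[of _ _ \<sigma>]) auto
    next
      fix \<sigma> assume "\<sigma> \<in> D"
      then show "\<exists>a b. h \<sigma> = a - b \<and> a \<in> A \<and> b \<in> A" unfolding h_def D_def FG(3)
        by (intro exI[of _ "G (unp 0 \<sigma>)"] exI[of _ "G (unp 1 \<sigma>)"]) auto
    qed
  qed
qed


definition ostar :: "'a::euclidean_space set \<Rightarrow> ennreal" where
  "ostar X = (INF B \<in> {B. B \<in> sets borel \<and> X \<subseteq> B}. emeasure lborel B)"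

lemma ostar_le: "B \<in> sets borel \<Longrightarrow> X \<subseteq> B \<Longrightarrow> ostar X \<le> emeasure lborel B"
  unfolding ostar_def by (rule INF_lower) auto

lemma ostar_mono: "X \<subseteq> Y \<Longrightarrow> ostar X \<le> ostar Y"
  unfolding ostar_def by (rule INF_mono) auto

lemma ostar_borel: "X \<in> sets borel \<Longrightarrow> ostar X = emeasure lborel X"
  unfolding ostar_def by (rule antisym) (auto intro!: INF_lower INF_greatest emeasure_mono)

lemma ostar_bounded:
  fixes X :: "'a::euclidean_space set"
  shows "X \<subseteq> cball 0 r \<Longrightarrow> ostar X < \<infinity>"
proof -
  assume "X \<subseteq> cball 0 r"
  then have "ostar X \<le> emeasure lborel (cball (0::'a) r)" by (intro ostar_le) auto
  then show ?thesis using emeasure_lborel_cball_finite[of 0 r] by (rule le_less_trans)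
qed

lemma ostar_hull:
  fixes X :: "'a::euclidean_space set"
  assumes fin: "ostar X < \<infinity>"
  obtains H where "H \<in> sets borel" "X \<subseteq> H" "emeasure lborel H = ostar X"
proof -
  have "\<forall>n::nat. \<exists>B. B \<in> sets borel \<and> X \<subseteq> B \<and> emeasure lborel B < ostar X + ennreal (inverse (real (Suc n)))"
  proof
    fix n :: nat
    have "ostar X < ostar X + ennreal (inverse (real (Suc n)))"
      using fin by (simp add: ennreal_add_left_cancel_less)
    then show "\<exists>B. B \<in> sets borel \<and> X \<subseteq> B \<and> emeasure lborel B < ostar X + ennreal (inverse (real (Suc n)))"
      unfolding ostar_def[of X] by (subst (asm) INF_less_iff) auto
  qed
  then obtain B where B: "\<forall>n. B n \<in> sets borel \<and> X \<subseteq> B n \<and> emeasure lborel (B n) < ostar X + ennreal (inverse (real (Suc n)))"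
    unfolding choice_iff by (elim exE) (rule that, assumption)
  define H where "H = (\<Inter>n. B n)"
  have Hb: "H \<in> sets borel" unfolding H_def using B by auto
  have XH: "X \<subseteq> H" unfolding H_def using B by auto
  have "emeasure lborel H \<le> ostar X"
  proof (rule ennreal_le_epsilon)
    fix e :: real assume "0 < e"
    then obtain n where n: "n > 0" "inverse (real n) < e" using ex_inverse_of_nat_less by blast
    have "emeasure lborel H \<le> emeasure lborel (B (n - 1))"
      unfolding H_def by (rule emeasure_mono) (use B in auto)
    also have "\<dots> \<le> ostar X + ennreal (inverse (real (Suc (n - 1))))" using B less_imp_le by blast
    also have "\<dots> \<le> ostar X + ennreal e" using n by (intro add_left_mono ennreal_leI) simp
    finally show "emeasure lborel H \<le> ostar X + ennreal e" .
  qed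
  moreover have "ostar X \<le> emeasure lborel H" using ostar_le[OF _ XH] Hb by simp
  ultimately show ?thesis using that[OF Hb XH] by simp
qed

lemma ostar_incseq:
  fixes X :: "nat \<Rightarrow> 'a::euclidean_space set"
  assumes inc: "incseq X" and bnd: "(\<Union>n. X n) \<subseteq> cball 0 r"
  shows "ostar (\<Union>n. X n) \<le> (SUP n. ostar (X n))"
proof -
  have "\<forall>n. \<exists>H. H \<in> sets borel \<and> X n \<subseteq> H \<and> emeasure lborel H = ostar (X n)"
  proof
    fix n
    have "ostar (X n) < \<infinity>" using bnd by (intro ostar_bounded[of _ r]) auto
    from ostar_hull[OF this] show "\<exists>H. H \<in> sets borel \<and> X n \<subseteq> H \<and> emeasure lborel H = ostar (X n)" by metis
  qed
  then obtain H where H: "\<forall>n. H n \<in> sets borel \<and> X n \<subseteq> H n \<and> emeasure lborel (H n) = ostar (X n)"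
    unfolding choice_iff by (elim exE) (rule that, assumption)
  define H' where "H' n = (\<Inter>m\<in>{n..}. H m)" for n
  have H'b: "H' n \<in> sets borel" for n unfolding H'_def using H by auto
  have XH': "X n \<subseteq> H' n" for n
    unfolding H'_def using H inc by (auto simp: incseq_def) blast
  have eqH': "emeasure lborel (H' n) = ostar (X n)" for n
  proof (rule antisym)
    have "emeasure lborel (H' n) \<le> emeasure lborel (H n)"
      by (rule emeasure_mono) (use H in \<open>auto simp: H'_def\<close>)
    then show "emeasure lborel (H' n) \<le> ostar (X n)" using H by simp
    show "ostar (X n) \<le> emeasure lborel (H' n)" using ostar_le[OF _ XH'] H'b by simp
  qed
  have incH': "incseq H'" unfolding incseq_def H'_def by auto
  have "ostar (\<Union>n. X n) \<le> emeasure lborel (\<Union>n. H' n)"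
    by (rule ostar_le) (use H'b XH' in auto)
  also have "\<dots> = (SUP n. emeasure lborel (H' n))"
    by (rule SUP_emeasure_incseq[symmetric]) (use H'b incH' in auto)
  also have "\<dots> = (SUP n. ostar (X n))" using eqH' by simp
  finally show ?thesis .
qed


definition Sig :: "(nat \<Rightarrow> 'a::real_normed_vector) set \<Rightarrow> (nat \<Rightarrow> nat) \<Rightarrow> nat \<Rightarrow> (nat \<Rightarrow> 'a) set" where
  "Sig F m n = {\<sigma> \<in> F. \<forall>i<n. norm (\<sigma> i) \<le> real (m i)}"

lemma Sig_0[simp]: "Sig F m 0 = F"
  unfolding Sig_def by auto

lemma Sig_sub: "Sig F m n \<subseteq> F"
  unfolding Sig_def by auto

lemma Sig_cong: "(\<And>i. i < n \<Longrightarrow> m i = m' i) \<Longrightarrow> Sig F m n = Sig F m' n"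
  unfolding Sig_def by auto

lemma Sig_dec: "Sig F m (Suc n) \<subseteq> Sig F m n"
  unfolding Sig_def by auto

lemma Sig_decseq: "decseq (\<lambda>n. Sig F m n)"
  unfolding Sig_def decseq_def by auto

lemma Sig_incseq: "incseq (\<lambda>j. Sig F (m(n := j)) (Suc n))"
  unfolding Sig_def incseq_def by (auto simp: less_Suc_eq)

lemma Sig_UN: "(\<Union>j. Sig F (m(n := j)) (Suc n)) = Sig F m n"
proof safe
  fix \<sigma> assume s: "\<sigma> \<in> Sig F m n"
  obtain j :: nat where "norm (\<sigma> n) \<le> real j" using real_arch_simple by blast
  then have "\<sigma> \<in> Sig F (m(n := j)) (Suc n)" using s unfolding Sig_def by (auto simp: less_Suc_eq)
  then show "\<sigma> \<in> (\<Union>j. Sig F (m(n := j)) (Suc n))" by blast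
qed (auto simp: Sig_def less_Suc_eq)

lemma cap_compact:
  fixes F :: "(nat \<Rightarrow> 'a::euclidean_space) set" and G :: "(nat \<Rightarrow> 'a) \<Rightarrow> 'b::euclidean_space"
  assumes F: "closed F" and G: "continuous_on F G" and y: "\<And>n. y \<in> closure (G ` Sig F m n)"
  shows "y \<in> G ` F"
proof -
  have "\<forall>n. \<exists>\<sigma>. \<sigma> \<in> Sig F m n \<and> dist (G \<sigma>) y < inverse (real (Suc n))"
  proof
    fix n
    have "\<exists>z\<in>G ` Sig F m n. dist z y < inverse (real (Suc n))"
      using y[of n] unfolding closure_approachable by simp
    then show "\<exists>\<sigma>. \<sigma> \<in> Sig F m n \<and> dist (G \<sigma>) y < inverse (real (Suc n))" by auto
  qed
  then obtain s :: "nat \<Rightarrow> nat \<Rightarrow> 'a" where s: "\<forall>n. s n \<in> Sig F m n \<and> dist (G (s n)) y < inverse (real (Suc n))"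
    unfolding choice_iff by (elim exE) (rule that, assumption)
  define \<tau> :: "nat \<Rightarrow> nat \<Rightarrow> 'a" where "\<tau> n = (\<lambda>i. if i < n then s n i else 0)" for n
  define P :: "(nat \<Rightarrow> 'a) set" where "P = PiE UNIV (\<lambda>i. cball 0 (real (m i)))"
  have "compactin (product_topology (\<lambda>_. euclidean) UNIV) P"
    unfolding P_def by (subst compactin_PiE) auto
  then have cP: "compact P" by (simp add: euclidean_product_topology)
  have \<tau>P: "\<forall>n. \<tau> n \<in> P"
  proof
    fix n
    have "norm (s n i) \<le> real (m i)" if "i < n" for i
      using s that unfolding Sig_def by auto
    then show "\<tau> n \<in> P" unfolding P_def \<tau>_def by (auto simp: PiE_def Pi_def extensional_def)
  qed
  obtain l rr where l: "l \<in> P" and rr: "strict_mono (rr :: nat \<Rightarrow> nat)" and lim: "(\<tau> \<circ> rr) \<longlonglongrightarrow> l"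
    using seq_compactE[OF compact_imp_seq_compact[OF cP] \<tau>P] by blast
  have lim2: "(\<lambda>j. s (rr j)) \<longlonglongrightarrow> l"
    unfolding tendsto_fun_iff
  proof
    fix i
    have "(\<lambda>j. \<tau> (rr j) i) \<longlonglongrightarrow> l i" using lim unfolding tendsto_fun_iff comp_def by auto
    moreover have "eventually (\<lambda>j. \<tau> (rr j) i = s (rr j) i) sequentially"
      unfolding eventually_sequentially
    proof (intro exI[of _ "Suc i"] allI impI)
      fix j assume "Suc i \<le> j"
      then have "i < rr j" using seq_suble[OF rr, of j] by simp
      then show "\<tau> (rr j) i = s (rr j) i" unfolding \<tau>_def by simp
    qed
    ultimately show "(\<lambda>j. s (rr j) i) \<longlonglongrightarrow> l i" by (rule Lim_transform_eventually)
  qed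
  have sF: "\<And>j. s (rr j) \<in> F" using s Sig_sub by blast
  have lF: "l \<in> F" by (rule closed_seqD[OF F sF lim2])
  have t1: "(\<lambda>j. G (s (rr j))) \<longlonglongrightarrow> G l"
    by (rule continuous_on_tendsto_compose[OF G lim2 lF]) (use sF in auto)
  have t2: "(\<lambda>j. G (s (rr j))) \<longlonglongrightarrow> y"
    unfolding tendsto_iff
  proof (intro allI impI)
    fix \<epsilon> :: real assume "\<epsilon> > 0"
    then obtain N where N: "N > 0" "inverse (real N) < \<epsilon>" using ex_inverse_of_nat_less by blast
    show "eventually (\<lambda>j. dist (G (s (rr j))) y < \<epsilon>) sequentially"
      unfolding eventually_sequentially
    proof (intro exI[of _ N] allI impI)
      fix j assume "N \<le> j"
      then have "N \<le> Suc (rr j)" using seq_suble[OF rr, of j] by simp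
      then have "inverse (real (Suc (rr j))) \<le> inverse (real N)"
        using N by (intro le_imp_inverse_le) auto
      then show "dist (G (s (rr j))) y < \<epsilon>" using s N by (meson less_le_trans order_less_trans)
    qed
  qed
  have "y = G l" using LIMSEQ_unique[OF t2 t1] .
  then show ?thesis using lF by auto
qed


definition ost :: "'a::euclidean_space set \<Rightarrow> real" where
  "ost X = enn2real (ostar X)"

lemma ostar_oo:
  fixes X :: "'a::euclidean_space set"
  shows "X \<subseteq> cball 0 r \<Longrightarrow> ostar X = ennreal (ost X)"
  unfolding ost_def using ostar_bounded[of X r] by simp

lemma cap_step:
  fixes F :: "(nat \<Rightarrow> 'a::euclidean_space) set" and G :: "(nat \<Rightarrow> 'a) \<Rightarrow> 'b::euclidean_space"
  assumes bnd: "G ` F \<subseteq> cball 0 r" and \<delta>: "\<delta> > 0"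
  shows "\<exists>j. ost (G ` Sig F (m(n := j)) (Suc n)) > ost (G ` Sig F m n) - \<delta>"
proof -
  define Y where "Y j = G ` Sig F (m(n := j)) (Suc n)" for j
  have incY: "incseq Y" unfolding Y_def using Sig_incseq[of F m n] by (auto simp: incseq_def image_mono)
  have "(\<Union>j. Y j) = G ` (\<Union>j. Sig F (m(n := j)) (Suc n))" unfolding Y_def by auto
  then have UY: "(\<Union>j. Y j) = G ` Sig F m n" by (simp only: Sig_UN)
  have Yb: "Y j \<subseteq> cball 0 r" for j using bnd Sig_sub unfolding Y_def by blast
  have UYb: "(\<Union>j. Y j) \<subseteq> cball 0 r" using Yb by auto
  define a where "a = ost (G ` Sig F m n) - \<delta>"
  show ?thesis
  proof (cases "a < 0")
    case True
    then show ?thesis unfolding a_def ost_def by (intro exI[of _ 0]) (smt (verit) enn2real_nonneg)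
  next
    case False
    have "ennreal a < ostar (\<Union>j. Y j)"
      unfolding ostar_oo[OF UYb] using False \<delta> by (subst ennreal_less_iff) (auto simp: a_def UY)
    also have "\<dots> \<le> (SUP j. ostar (Y j))" by (rule ostar_incseq[OF incY UYb])
    finally obtain j where "ennreal a < ostar (Y j)" by (auto simp: less_SUP_iff)
    then have "a < ost (Y j)" unfolding ostar_oo[OF Yb] using False by (subst (asm) ennreal_less_iff) auto
    then show ?thesis unfolding a_def Y_def by blast
  qed
qed

fun mseq :: "(nat \<Rightarrow> (nat \<Rightarrow> nat) \<Rightarrow> bool) \<Rightarrow> nat \<Rightarrow> (nat \<Rightarrow> nat)" where
  "mseq P 0 = (\<lambda>_. 0)"
| "mseq P (Suc n) = (mseq P n)(n := (SOME j. P (Suc n) ((mseq P n)(n := j))))"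

lemma mseq_P:
  assumes "P 0 (\<lambda>_. 0)" and "\<And>n m. P n m \<Longrightarrow> \<exists>j. P (Suc n) (m(n := j))"
  shows "P n (mseq P n)"
proof (induction n)
  case 0 then show ?case using assms(1) by simp
next
  case (Suc n)
  then have "\<exists>j. P (Suc n) ((mseq P n)(n := j))" by (rule assms(2))
  then show ?case by (simp only: mseq.simps) (rule someI_ex)
qed

lemma mseq_stable: "i < n \<Longrightarrow> mseq P n i = mseq P (Suc i) i"
proof (induction n)
  case 0 then show ?case by simp
next
  case (Suc n)
  then show ?case by (cases "i = n") auto
qed

lemma inner_approx:
  fixes F :: "(nat \<Rightarrow> 'a::euclidean_space) set" and G :: "(nat \<Rightarrow> 'a) \<Rightarrow> 'b::euclidean_space"
  assumes F: "closed F" and G: "continuous_on F G" and bnd: "G ` F \<subseteq> cball 0 r" and e: "e > 0"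
  shows "\<exists>C. closed C \<and> C \<subseteq> G ` F \<and> ost (G ` F) - e \<le> measure lborel C"
proof -
  define T where "T = ost (G ` F)"
  define P where "P n m \<longleftrightarrow> ost (G ` Sig F m n) > T - e + e * (1/2) ^ Suc n" for n m
  have P0: "P 0 (\<lambda>_. 0)" unfolding P_def T_def using e by simp
  have PS: "\<exists>j. P (Suc n) (m(n := j))" if "P n m" for n m
  proof -
    have "e * (1/2) ^ Suc (Suc n) > 0" using e by simp
    from cap_step[OF bnd this, of m n] obtain j where
      j: "ost (G ` Sig F (m(n := j)) (Suc n)) > ost (G ` Sig F m n) - e * (1/2) ^ Suc (Suc n)" by blast
    have "e * (1/2) ^ Suc n - e * (1/2) ^ Suc (Suc n) = e * (1/2) ^ Suc (Suc n)" by simp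
    then have "P (Suc n) (m(n := j))" using j that unfolding P_def by linarith
    then show ?thesis by blast
  qed
  define m where "m i = mseq P (Suc i) i" for i
  have Pm: "P n m" for n
  proof -
    have "P n (mseq P n)" by (rule mseq_P[OF P0 PS])
    moreover have "Sig F (mseq P n) n = Sig F m n"
      by (rule Sig_cong) (simp add: m_def mseq_stable)
    ultimately show ?thesis unfolding P_def by simp
  qed
  define D where "D n = closure (G ` Sig F m n)" for n
  define C where "C = (\<Inter>n. D n)"
  have Dc: "closed (D n)" for n unfolding D_def by simp
  have Db: "D n \<subseteq> cball 0 r" for n
    unfolding D_def by (rule closure_minimal) (use bnd Sig_sub in blast)+
  have decD: "decseq D" unfolding D_def decseq_def
    using Sig_decseq[of F m] by (auto simp: decseq_def intro!: closure_mono image_mono)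
  have CG: "C \<subseteq> G ` F"
  proof
    fix y assume "y \<in> C"
    then have "\<And>n. y \<in> closure (G ` Sig F m n)" unfolding C_def D_def by auto
    then show "y \<in> G ` F" by (rule cap_compact[OF F G])
  qed
  have Cc: "closed C" unfolding C_def using Dc by blast
  have Dfin: "emeasure lborel (D n) \<noteq> \<infinity>" for n
    using emeasure_mono[OF Db[of n], of lborel] emeasure_lborel_cball_finite[of "0::'b" r] by auto
  have "emeasure lborel C = (INF n. emeasure lborel (D n))"
    unfolding C_def by (rule INF_emeasure_decseq[symmetric]) (use Dc decD Dfin in auto)
  also have "\<dots> \<ge> ennreal (T - e)"
  proof (rule INF_greatest)
    fix n
    have sb: "G ` Sig F m n \<subseteq> cball 0 r" using bnd Sig_sub by blast
    have "ennreal (T - e) \<le> ennreal (ost (G ` Sig F m n))"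
      using Pm[of n] e unfolding P_def by (intro ennreal_leI) (smt (verit) zero_less_power mult_pos_pos half_gt_zero)
    also have "\<dots> = ostar (G ` Sig F m n)" using ostar_oo[OF sb] by simp
    also have "\<dots> \<le> emeasure lborel (D n)"
      unfolding D_def using closure_subset[of "G ` Sig F m n"] by (intro ostar_le) auto
    finally show "ennreal (T - e) \<le> emeasure lborel (D n)" .
  qed
  finally have "ennreal (T - e) \<le> emeasure lborel C" .
  moreover have "emeasure lborel C = ennreal (measure lborel C)"
  proof -
    have "emeasure lborel C \<le> emeasure lborel (D 0)" unfolding C_def by (rule emeasure_mono) (use Dc in auto)
    then have "emeasure lborel C \<noteq> top" using Dfin[of 0] by (auto simp: top_unique)
    then show ?thesis by (rule emeasure_eq_ennreal_measure)
  qed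
  ultimately have "T - e \<le> measure lborel C" by simp
  then show ?thesis using Cc CG unfolding T_def by blast
qed


lemma analytic_bounded_lebesgue:
  fixes F :: "(nat \<Rightarrow> 'a::euclidean_space) set" and G :: "(nat \<Rightarrow> 'a) \<Rightarrow> 'b::euclidean_space"
  assumes F: "closed F" and G: "continuous_on F G" and bnd: "G ` F \<subseteq> cball 0 r"
  shows "G ` F \<in> sets lebesgue"
proof -
  define S where "S = G ` F"
  have Sb: "S \<subseteq> cball 0 r" using bnd S_def by simp
  obtain H where H: "H \<in> sets borel" "S \<subseteq> H" "emeasure lborel H = ostar S"
    by (rule ostar_hull[OF ostar_bounded[OF Sb]])
  have eH: "emeasure lborel H = ennreal (ost S)" using H(3) ostar_oo[OF Sb] by simp
  have Hfin: "emeasure lborel H < \<infinity>" using eH by simp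
  have mH: "measure lborel H = ost S" unfolding measure_def eH by (simp add: ost_def)
  have "\<forall>n. \<exists>C. closed C \<and> C \<subseteq> S \<and> ost S - inverse (real (Suc n)) \<le> measure lborel C"
  proof
    fix n
    show "\<exists>C. closed C \<and> C \<subseteq> S \<and> ost S - inverse (real (Suc n)) \<le> measure lborel C"
      unfolding S_def by (rule inner_approx[OF F G bnd]) simp
  qed
  then obtain C :: "nat \<Rightarrow> 'b set" where C: "\<forall>n. closed (C n) \<and> C n \<subseteq> S \<and> ost S - inverse (real (Suc n)) \<le> measure lborel (C n)"
    unfolding choice_iff by (elim exE) (rule that, assumption)
  define L where "L = (\<Union>n. C n)"
  have Cb: "C n \<in> sets borel" for n using C by auto
  have Lb: "L \<in> sets borel" unfolding L_def using Cb by auto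
  have LS: "L \<subseteq> S" unfolding L_def using C by auto
  have HLb: "H - L \<in> sets borel" using H(1) Lb by auto
  have CH: "C n \<subseteq> H" for n using C H(2) by blast
  have mle: "measure lborel (H - L) \<le> inverse (real (Suc n))" for n
  proof -
    have "H - C n \<in> fmeasurable lborel"
      by (rule fmeasurableI) (use H(1) Cb Hfin emeasure_mono[of "H - C n" H lborel] in \<open>auto simp: le_less_trans\<close>)
    then have "measure lborel (H - L) \<le> measure lborel (H - C n)"
      by (intro measure_mono_fmeasurable) (use HLb in \<open>auto simp: L_def\<close>)
    also have "\<dots> = measure lborel H - measure lborel (C n)"
      by (rule measure_Diff) (use Hfin H(1) Cb CH in auto)
    also have "\<dots> \<le> inverse (real (Suc n))"
    proof -
      have "ost S - inverse (real (Suc n)) \<le> measure lborel (C n)" using C by blast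
      then show ?thesis using mH by linarith
    qed
    finally show ?thesis .
  qed
  have "measure lborel (H - L) \<le> 0 + e" if "e > 0" for e
  proof -
    obtain N where N: "N > 0" "inverse (real N) < e" using ex_inverse_of_nat_less[OF \<open>e > 0\<close>] by auto
    have "Suc (N - 1) = N" using N by simp
    then have "measure lborel (H - L) \<le> inverse (real N)" using mle[of "N - 1"] by simp
    then show ?thesis using N by simp
  qed
  then have "measure lborel (H - L) \<le> 0" by (rule field_le_epsilon)
  then have m0: "measure lborel (H - L) = 0" using measure_nonneg[of lborel "H - L"] by linarith
  have "emeasure lborel (H - L) \<le> emeasure lborel H" by (rule emeasure_mono) (use H(1) in auto)
  then have "emeasure lborel (H - L) \<noteq> \<infinity>" using Hfin by (auto simp: top_unique)
  then have "emeasure lborel (H - L) = 0" using m0 emeasure_eq_ennreal_measure by fastforce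
  then have null: "H - L \<in> null_sets lborel" using HLb by auto
  have "S = L \<union> (S - L)" using LS by auto
  moreover have "S - L \<subseteq> H - L" using H(2) by auto
  ultimately have "S \<in> sets lebesgue" using null Lb by (intro sets_completionI) auto
  then show ?thesis unfolding S_def .
qed

lemma analytic_lebesgue:
  fixes S :: "'a::euclidean_space set"
  assumes "analytic S" shows "S \<in> sets lebesgue"
proof -
  obtain F :: "(nat \<Rightarrow> 'a) set" and G :: "(nat \<Rightarrow> 'a) \<Rightarrow> 'a" where FG: "closed F" "continuous_on F G" "S = G ` F"
    using assms unfolding analytic_def by (elim exE conjE) (rule that)
  define Fr where "Fr r = F \<inter> G -` cball 0 (real r)" for r :: nat
  have "G ` Fr r \<in> sets lebesgue" for r
  proof (rule analytic_bounded_lebesgue)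
    show "closed (Fr r)" unfolding Fr_def by (rule continuous_closed_preimage[OF FG(2) FG(1) closed_cball])
    show "continuous_on (Fr r) G" by (rule continuous_on_subset[OF FG(2)]) (auto simp: Fr_def)
    show "G ` Fr r \<subseteq> cball 0 (real r)" unfolding Fr_def by auto
  qed
  moreover have "S = (\<Union>r. G ` Fr r)"
  proof safe
    fix x assume "x \<in> S"
    then obtain \<sigma> where \<sigma>: "\<sigma> \<in> F" "x = G \<sigma>" using FG(3) by auto
    obtain r :: nat where "norm x \<le> real r" using real_arch_simple by blast
    then have "\<sigma> \<in> Fr r" unfolding Fr_def using \<sigma> by (auto simp: dist_norm)
    then show "x \<in> (\<Union>r. G ` Fr r)" using \<sigma> by blast
  qed (auto simp: Fr_def FG(3))
  ultimately show ?thesis by auto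
qed


theorem lemma4p5:
  fixes A :: "'a::euclidean_space set"
  assumes "A \<in> sets (borel :: 'a measure)"
  shows "measure gaussian_measure {a - b | a b. a \<in> A \<and> b \<in> A}
           \<ge> (measure gaussian_measure A) ^ 4"
proof -
  have "analytic A" using analytic_borel[OF assms] by simp
  then have "analytic {a - b | a b. a \<in> A \<and> b \<in> A}" by (rule analytic_minus)
  then have "{a - b | a b. a \<in> A \<and> b \<in> A} \<in> sets lebesgue" by (rule analytic_lebesgue)
  then show ?thesis by (rule final[OF assms])
qed

end
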